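(* Let $\mathcal{L}$ be the set of formulas of classical propositional calculus (with $\neg$ and $\wedge$ as basic connectives and the other connectives defined classically), and let $a, b \in \mathcal{L}$. The following are equivalent: (1) $a$ logically implies $b$ in classical propositional logic, $a \models b$; (2) for every operation $\mathcal{C}: 2^{\mathcal{L}}\to 2^{\mathcal{L}}$ satisfying Inclusion, Idempotence, Monotonicity, Weak Compactness, $\wedge$-R, $\neg$-R1 and $\neg$-R2, one has $b \in \mathcal{C}(\{a\})$; (3) for every operation $\mathcal{C}: 2^{\mathcal{L}}\to 2^{\mathcal{L}}$ satisfying Inclusion, Cumulativity, Weak Compactness, $\wedge$-R, $\neg$-R1 and $\neg$-R2, one has $b \in \mathcal{C}(\{a\})$; (4) for every operation $\mathcal{C}$ as in (3) and every $A \subseteq \mathcal{L}$, one has $b \in \mathcal{C}(A \cup\{a\})$; (5) for every operation $\mathcal{C}$ as in (3), one has $\mathcal{C}(\{a, \neg b\}) = \mathcal{L}$.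
   Context: Write $\mathcal{C}(A, a_1,\dots,a_k)$ for $\mathcal{C}(A\cup\{a_1,\dots,a_k\})$. Properties, for all $A,B\subseteq\mathcal{L}$, $a,b\in\mathcal{L}$: Inclusion: $A \subseteq \mathcal{C}(A)$. Idempotence: $\mathcal{C}(\mathcal{C}(A)) = \mathcal{C}(A)$. Monotonicity: $A \subseteq B \Rightarrow \mathcal{C}(A)\subseteq\mathcal{C}(B)$. Cumulativity: $A \subseteq B \subseteq \mathcal{C}(A) \Rightarrow \mathcal{C}(A)=\mathcal{C}(B)$. Weak Compactness: if $\mathcal{C}(A)=\mathcal{L}$ then $\mathcal{C}(B)=\mathcal{L}$ for some finite $B\subseteq A$. $\wedge$-R: $\mathcal{C}(A, a\wedge b) = \mathcal{C}(A,a,b)$. $\neg$-R1: $\mathcal{C}(A,a,\neg a)=\mathcal{L}$. $\neg$-R2: if $\mathcal{C}(A,\neg a)=\mathcal{L}$ then $a\in\mathcal{C}(A)$. *)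

theory Defs
  imports Main
begin

datatype form = Atom nat | Neg form | Conj form form

primrec holds :: "(nat \<Rightarrow> bool) \<Rightarrow> form \<Rightarrow> bool" where
  "holds v (Atom p) = v p"
| "holds v (Neg a) = (\<not> holds v a)"
| "holds v (Conj a b) = (holds v a \<and> holds v b)"

definition entails :: "form \<Rightarrow> form \<Rightarrow> bool" (infix "\<Turnstile>" 50) where
  "a \<Turnstile> b \<longleftrightarrow> (\<forall>v. holds v a \<longrightarrow> holds v b)"

definition inclusion :: "(form set \<Rightarrow> form set) \<Rightarrow> bool" where
  "inclusion C \<longleftrightarrow> (\<forall>A. A \<subseteq> C A)"

definition idempotence :: "(form set \<Rightarrow> form set) \<Rightarrow> bool" where
  "idempotence C \<longleftrightarrow> (\<forall>A. C (C A) = C A)"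

definition monotonicity :: "(form set \<Rightarrow> form set) \<Rightarrow> bool" where
  "monotonicity C \<longleftrightarrow> (\<forall>A B. A \<subseteq> B \<longrightarrow> C A \<subseteq> C B)"

definition cumulativity :: "(form set \<Rightarrow> form set) \<Rightarrow> bool" where
  "cumulativity C \<longleftrightarrow> (\<forall>A B. A \<subseteq> B \<and> B \<subseteq> C A \<longrightarrow> C A = C B)"

definition weak_compactness :: "(form set \<Rightarrow> form set) \<Rightarrow> bool" where
  "weak_compactness C \<longleftrightarrow>
     (\<forall>A. C A = UNIV \<longrightarrow> (\<exists>B. finite B \<and> B \<subseteq> A \<and> C B = UNIV))"

definition conj_R :: "(form set \<Rightarrow> form set) \<Rightarrow> bool" where
  "conj_R C \<longleftrightarrow> (\<forall>A a b. C (A \<union> {Conj a b}) = C (A \<union> {a, b}))"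

definition neg_R1 :: "(form set \<Rightarrow> form set) \<Rightarrow> bool" where
  "neg_R1 C \<longleftrightarrow> (\<forall>A a. C (A \<union> {a, Neg a}) = UNIV)"

definition neg_R2 :: "(form set \<Rightarrow> form set) \<Rightarrow> bool" where
  "neg_R2 C \<longleftrightarrow> (\<forall>A a. C (A \<union> {Neg a}) = UNIV \<longrightarrow> a \<in> C A)"

definition monotone_ops :: "(form set \<Rightarrow> form set) set" where
  "monotone_ops = {C. inclusion C \<and> idempotence C \<and> monotonicity C \<and> weak_compactness C
                     \<and> conj_R C \<and> neg_R1 C \<and> neg_R2 C}"

definition cumulative_ops :: "(form set \<Rightarrow> form set) set" where
  "cumulative_ops = {C. inclusion C \<and> cumulativity C \<and> weak_compactness C
                     \<and> conj_R C \<and> neg_R1 C \<and> neg_R2 C}"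

end

theory Submission
  imports Defs
begin

lemma cum_add:
  assumes "C \<in> cumulative_ops" "x \<in> C D"
  shows "C (D \<union> {x}) = C D"
proof -
  have "D \<subseteq> C D" using assms(1) unfolding cumulative_ops_def inclusion_def by blast
  then have "D \<subseteq> D \<union> {x} \<and> D \<union> {x} \<subseteq> C D" using assms(2) by blast
  moreover have "\<And>A B. A \<subseteq> B \<Longrightarrow> B \<subseteq> C A \<Longrightarrow> C A = C B"
    using assms(1) unfolding cumulative_ops_def cumulativity_def by blast
  ultimately show ?thesis by (metis (no_types))
qed

lemma sum_Un_le_nat: "finite A \<Longrightarrow> finite B \<Longrightarrow> sum (f::'a\<Rightarrow>nat) (A \<union> B) \<le> sum f A + sum f B"
  by (simp add: sum_Un_nat)

lemma sum_two_le: "sum (f::'a\<Rightarrow>nat) {x, y} \<le> f x + f y"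
  by (cases "x = y") auto

lemma key:
  assumes C: "C \<in> cumulative_ops"
  shows "finite S \<Longrightarrow> \<not>(\<exists>v. \<forall>y\<in>S. holds v y) \<Longrightarrow> C (A \<union> S) = UNIV"
proof (induction "sum size S" arbitrary: S A rule: less_induct)
  case less
  have R1: "\<And>A a. C (A \<union> {a, Neg a}) = UNIV" using C unfolding cumulative_ops_def neg_R1_def by blast
  have R2: "\<And>A a. C (A \<union> {Neg a}) = UNIV \<Longrightarrow> a \<in> C A" using C unfolding cumulative_ops_def neg_R2_def by blast
  have CR: "\<And>A a b. C (A \<union> {Conj a b}) = C (A \<union> {a, b})" using C unfolding cumulative_ops_def conj_R_def by blast
  show ?case
  proof (cases "\<exists>x y. Conj x y \<in> S")
    case True
    then obtain x y where c: "Conj x y \<in> S" by blast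
    define S2 where "S2 = (S - {Conj x y}) \<union> {x, y}"
    have fin: "finite S2" using less.prems unfolding S2_def by simp
    have "sum size S2 \<le> sum size (S - {Conj x y}) + sum size {x,y}"
      unfolding S2_def by (rule sum_Un_le_nat) (use less.prems in auto)
    also have "\<dots> \<le> sum size (S - {Conj x y}) + size x + size y" using sum_two_le[of size x y] by simp
    also have "\<dots> < sum size S" using sum.remove[OF less.prems(1) c, of size] by simp
    finally have lt: "sum size S2 < sum size S" .
    have uns: "\<not>(\<exists>v. \<forall>y\<in>S2. holds v y)"
    proof
      assume "\<exists>v. \<forall>y\<in>S2. holds v y"
      then obtain v where "\<forall>y\<in>S2. holds v y" by blast
      then have "\<forall>z\<in>S. holds v z" unfolding S2_def by auto
      then show False using less.prems(2) by blast
    qed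
    have "C (A \<union> S) = C ((A \<union> (S - {Conj x y})) \<union> {Conj x y})"
      by (rule arg_cong[where f=C]) (use c in blast)
    also have "\<dots> = C ((A \<union> (S - {Conj x y})) \<union> {x, y})" by (rule CR)
    also have "\<dots> = C (A \<union> S2)" by (rule arg_cong[where f=C]) (unfold S2_def, blast)
    also have "\<dots> = UNIV" by (rule less.hyps[OF lt fin uns])
    finally show ?thesis .
  next
    case noC: False
    show ?thesis
    proof (cases "\<exists>x. Neg (Neg x) \<in> S")
      case True
      then obtain x where c: "Neg (Neg x) \<in> S" by blast
      define S2 where "S2 = (S - {Neg (Neg x)}) \<union> {x}"
      have fin: "finite S2" using less.prems unfolding S2_def by simp
      have "sum size S2 \<le> sum size (S - {Neg (Neg x)}) + sum size {x}"
        unfolding S2_def by (rule sum_Un_le_nat) (use less.prems in auto)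
      also have "\<dots> < sum size S" using sum.remove[OF less.prems(1) c, of size] by simp
      finally have lt: "sum size S2 < sum size S" .
      have uns: "\<not>(\<exists>v. \<forall>y\<in>S2. holds v y)"
      proof
        assume "\<exists>v. \<forall>y\<in>S2. holds v y"
        then obtain v where "\<forall>y\<in>S2. holds v y" by blast
        then have "\<forall>z\<in>S. holds v z" unfolding S2_def by auto
        then show False using less.prems(2) by blast
      qed
      have "C ((A \<union> S) \<union> {Neg x}) = C ((A \<union> S \<union> {Neg x}) \<union> {Neg x, Neg (Neg x)})"
        by (rule arg_cong[where f=C]) (use c in blast)
      also have "\<dots> = UNIV" by (rule R1)
      finally have xin: "x \<in> C (A \<union> S)" by (rule R2)
      have "C (A \<union> S) = C ((A \<union> S) \<union> {x})" using cum_add[OF C xin] by (rule sym)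
      also have "\<dots> = C ((A \<union> {Neg (Neg x)}) \<union> S2)"
        by (rule arg_cong[where f=C]) (unfold S2_def, use c in blast)
      also have "\<dots> = UNIV" by (rule less.hyps[OF lt fin uns])
      finally show ?thesis .
    next
      case noNN: False
      show ?thesis
      proof (cases "\<exists>x y. Neg (Conj x y) \<in> S")
        case True
        then obtain x y where c: "Neg (Conj x y) \<in> S" by blast
        define S1 where "S1 = (S - {Neg (Conj x y)}) \<union> {Neg x}"
        define S2 where "S2 = (S - {Neg (Conj x y)}) \<union> {Neg y}"
        have fin1: "finite S1" using less.prems unfolding S1_def by simp
        have fin2: "finite S2" using less.prems unfolding S2_def by simp
        have "sum size S1 \<le> sum size (S - {Neg (Conj x y)}) + sum size {Neg x}"
          unfolding S1_def by (rule sum_Un_le_nat) (use less.prems in auto)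
        also have "\<dots> < sum size S" using sum.remove[OF less.prems(1) c, of size] by simp
        finally have lt1: "sum size S1 < sum size S" .
        have "sum size S2 \<le> sum size (S - {Neg (Conj x y)}) + sum size {Neg y}"
          unfolding S2_def by (rule sum_Un_le_nat) (use less.prems in auto)
        also have "\<dots> < sum size S" using sum.remove[OF less.prems(1) c, of size] by simp
        finally have lt2: "sum size S2 < sum size S" .
        have uns1: "\<not>(\<exists>v. \<forall>y\<in>S1. holds v y)"
        proof
          assume "\<exists>v. \<forall>y\<in>S1. holds v y"
          then obtain v where "\<forall>y\<in>S1. holds v y" by blast
          then have "\<forall>z\<in>S. holds v z" unfolding S1_def by auto
          then show False using less.prems(2) by blast
        qed
        have uns2: "\<not>(\<exists>v. \<forall>y\<in>S2. holds v y)"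
        proof
          assume "\<exists>v. \<forall>y\<in>S2. holds v y"
          then obtain v where "\<forall>y\<in>S2. holds v y" by blast
          then have "\<forall>z\<in>S. holds v z" unfolding S2_def by auto
          then show False using less.prems(2) by blast
        qed
        define D where "D = A \<union> S"
        have "C (D \<union> {Neg x}) = C ((A \<union> {Neg (Conj x y)}) \<union> S1)"
          by (rule arg_cong[where f=C]) (unfold S1_def D_def, use c in blast)
        also have "\<dots> = UNIV" by (rule less.hyps[OF lt1 fin1 uns1])
        finally have "x \<in> C D" by (rule R2)
        then have e1: "C (D \<union> {x}) = C D" by (rule cum_add[OF C])
        have "C ((D \<union> {x}) \<union> {Neg y}) = C ((A \<union> {Neg (Conj x y), x}) \<union> S2)"
          by (rule arg_cong[where f=C]) (unfold S2_def D_def, use c in blast)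
        also have "\<dots> = UNIV" by (rule less.hyps[OF lt2 fin2 uns2])
        finally have "y \<in> C (D \<union> {x})" by (rule R2)
        then have e2: "C ((D \<union> {x}) \<union> {y}) = C (D \<union> {x})" by (rule cum_add[OF C])
        have "C ((D \<union> {x}) \<union> {y}) = C (D \<union> {x, y})" by (simp add: insert_commute)
        also have "\<dots> = C (D \<union> {Conj x y})" using CR by simp
        also have "\<dots> = C ((D \<union> {Conj x y}) \<union> {Conj x y, Neg (Conj x y)})"
          by (rule arg_cong[where f=C]) (unfold D_def, use c in blast)
        also have "\<dots> = UNIV" by (rule R1)
        finally have "C D = UNIV" using e1 e2 by simp
        then show ?thesis unfolding D_def .
      next
        case noNC: False
        have "\<exists>p. Atom p \<in> S \<and> Neg (Atom p) \<in> S"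
        proof (rule ccontr)
          assume nn: "\<not> (\<exists>p. Atom p \<in> S \<and> Neg (Atom p) \<in> S)"
          define v where "v p = (Atom p \<in> S)" for p
          have "\<forall>z\<in>S. holds v z"
          proof
            fix z assume z: "z \<in> S"
            show "holds v z"
            proof (cases z)
              case (Atom p) then show ?thesis using z by (simp add: v_def)
            next
              case (Neg w)
              then show ?thesis
              proof (cases w)
                case (Atom p) then show ?thesis using z nn Neg by (auto simp: v_def)
              next
                case (Neg u) then show ?thesis using z noNN \<open>z = Neg w\<close> by blast
              next
                case (Conj u t) then show ?thesis using z noNC \<open>z = Neg w\<close> by blast
              qed
            next
              case (Conj u t) then show ?thesis using z noC by blast
            qed
          qed
          then show False using less.prems(2) by blast
        qed
        then obtain p where "Atom p \<in> S" "Neg (Atom p) \<in> S" by blast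
        then have "C (A \<union> S) = C ((A \<union> S) \<union> {Atom p, Neg (Atom p)})"
          by (intro arg_cong[where f=C]) blast
        also have "\<dots> = UNIV" by (rule R1)
        finally show ?thesis .
      qed
    qed
  qed
qed

definition fcn :: "form set \<Rightarrow> form set" where
  "fcn A = {x. \<exists>B. finite B \<and> B \<subseteq> A \<and> (\<forall>v. (\<forall>y\<in>B. holds v y) \<longrightarrow> holds v x)}"

lemma fcn_iff: "x \<in> fcn A \<longleftrightarrow> (\<exists>B. finite B \<and> B \<subseteq> A \<and> (\<forall>v. (\<forall>y\<in>B. holds v y) \<longrightarrow> holds v x))"
  unfolding fcn_def by (rule mem_Collect_eq)

lemma fcn_I: "finite B \<Longrightarrow> B \<subseteq> A \<Longrightarrow> (\<And>v. \<forall>y\<in>B. holds v y \<Longrightarrow> holds v x) \<Longrightarrow> x \<in> fcn A"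
  unfolding fcn_iff by blast

lemma fcn_E: "x \<in> fcn A \<Longrightarrow> (\<And>B. finite B \<Longrightarrow> B \<subseteq> A \<Longrightarrow> \<forall>v. (\<forall>y\<in>B. holds v y) \<longrightarrow> holds v x \<Longrightarrow> P) \<Longrightarrow> P"
  unfolding fcn_iff by blast

lemma fcn_idem_sub: "fcn (fcn A) \<subseteq> fcn A"
proof
  fix x assume "x \<in> fcn (fcn A)"
  then obtain B where B: "finite B" "B \<subseteq> fcn A" "\<forall>v. (\<forall>y\<in>B. holds v y) \<longrightarrow> holds v x"
    by (rule fcn_E)
  have "\<forall>y\<in>B. \<exists>E. finite E \<and> E \<subseteq> A \<and> (\<forall>v. (\<forall>z\<in>E. holds v z) \<longrightarrow> holds v y)"
  proof
    fix y assume "y \<in> B"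
    then have "y \<in> fcn A" using B(2) by blast
    then show "\<exists>E. finite E \<and> E \<subseteq> A \<and> (\<forall>v. (\<forall>z\<in>E. holds v z) \<longrightarrow> holds v y)"
      unfolding fcn_iff .
  qed
  from bchoice[OF this] obtain g where g0: "\<forall>y\<in>B. finite (g y) \<and> g y \<subseteq> A \<and> (\<forall>v. (\<forall>z\<in>g y. holds v z) \<longrightarrow> holds v y)"
    by (elim exE)
  show "x \<in> fcn A"
  proof (rule fcn_I)
    show "finite (\<Union>(g ` B))" using B(1) g0 by simp
    show "\<Union>(g ` B) \<subseteq> A" using g0 by (simp add: UN_subset_iff)
    fix v assume h: "\<forall>z\<in>\<Union>(g ` B). holds v z"
    have "\<forall>y\<in>B. holds v y"
    proof
      fix y assume y: "y \<in> B"
      then have "\<forall>z\<in>g y. holds v z" using h by blast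
      then show "holds v y" using g0 y by blast
    qed
    then show "holds v x" using B(3) by blast
  qed
qed

lemma fcn_incl: "A \<subseteq> fcn A"
  unfolding fcn_def by (auto intro!: exI[of _ "{_}"])

lemma fcn_mono: "A \<subseteq> B \<Longrightarrow> fcn A \<subseteq> fcn B"
  unfolding fcn_def by blast

lemma fcn_univ: "fcn A = UNIV \<longleftrightarrow> (\<exists>B. finite B \<and> B \<subseteq> A \<and> \<not>(\<exists>v. \<forall>y\<in>B. holds v y))"
proof
  assume "fcn A = UNIV"
  then have "Conj (Atom 0) (Neg (Atom 0)) \<in> fcn A" by simp
  then show "\<exists>B. finite B \<and> B \<subseteq> A \<and> \<not>(\<exists>v. \<forall>y\<in>B. holds v y)" unfolding fcn_def by auto
next
  assume "\<exists>B. finite B \<and> B \<subseteq> A \<and> \<not>(\<exists>v. \<forall>y\<in>B. holds v y)"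
  then show "fcn A = UNIV" unfolding fcn_def by blast
qed

lemma fcn_univI: "finite B \<Longrightarrow> B \<subseteq> A \<Longrightarrow> \<not>(\<exists>v. \<forall>y\<in>B. holds v y) \<Longrightarrow> fcn A = UNIV"
  by (rule fcn_univ[THEN iffD2]) (intro exI conjI)

lemma fcn_univD: "fcn A = UNIV \<Longrightarrow> (\<And>B. finite B \<Longrightarrow> B \<subseteq> A \<Longrightarrow> \<not>(\<exists>v. \<forall>y\<in>B. holds v y) \<Longrightarrow> P) \<Longrightarrow> P"
  by (drule fcn_univ[THEN iffD1]) (elim exE conjE)

lemma fcn_inc: "inclusion fcn" unfolding inclusion_def using fcn_incl by blast
lemma fcn_idem: "idempotence fcn" unfolding idempotence_def
  by (intro allI subset_antisym fcn_idem_sub fcn_incl)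
lemma fcn_monot: "monotonicity fcn" unfolding monotonicity_def using fcn_mono by blast
lemma fcn_wc: "weak_compactness fcn" unfolding weak_compactness_def
proof (intro allI impI)
  fix A assume "fcn A = UNIV"
  then obtain B where B: "finite B" "B \<subseteq> A" "\<not>(\<exists>v. \<forall>y\<in>B. holds v y)" by (rule fcn_univD)
  have "fcn B = UNIV" by (rule fcn_univI[OF B(1) subset_refl B(3)])
  then show "\<exists>B. finite B \<and> B \<subseteq> A \<and> fcn B = UNIV" using B by blast
qed
lemma fcn_cr: "conj_R fcn" unfolding conj_R_def
proof (intro allI)
  fix A a b
  show "fcn (A \<union> {Conj a b}) = fcn (A \<union> {a, b})"
  proof
    show "fcn (A \<union> {Conj a b}) \<subseteq> fcn (A \<union> {a, b})"
    proof
      fix x assume "x \<in> fcn (A \<union> {Conj a b})"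
      then obtain B where B: "finite B" "B \<subseteq> A \<union> {Conj a b}" "\<forall>v. (\<forall>y\<in>B. holds v y) \<longrightarrow> holds v x"
        by (rule fcn_E)
      show "x \<in> fcn (A \<union> {a, b})"
      proof (rule fcn_I)
        show "finite ((B - {Conj a b}) \<union> {a, b})" using B(1) by simp
        show "(B - {Conj a b}) \<union> {a, b} \<subseteq> A \<union> {a, b}" using B(2) by blast
        fix v assume h: "\<forall>y\<in>(B - {Conj a b}) \<union> {a, b}. holds v y"
        then have "\<forall>y\<in>B. holds v y" by (metis DiffI Un_iff holds.simps(3) insertCI singletonD)
        then show "holds v x" using B(3) by blast
      qed
    qed
  next
    show "fcn (A \<union> {a, b}) \<subseteq> fcn (A \<union> {Conj a b})"
    proof
      fix x assume "x \<in> fcn (A \<union> {a, b})"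
      then obtain B where B: "finite B" "B \<subseteq> A \<union> {a, b}" "\<forall>v. (\<forall>y\<in>B. holds v y) \<longrightarrow> holds v x"
        by (rule fcn_E)
      show "x \<in> fcn (A \<union> {Conj a b})"
      proof (rule fcn_I)
        show "finite ((B - {a, b}) \<union> {Conj a b})" using B(1) by simp
        show "(B - {a, b}) \<union> {Conj a b} \<subseteq> A \<union> {Conj a b}" using B(2) by blast
        fix v assume h: "\<forall>y\<in>(B - {a, b}) \<union> {Conj a b}. holds v y"
        then have hc: "holds v a" "holds v b" by auto
        have "\<forall>y\<in>B. holds v y"
        proof
          fix y assume "y \<in> B"
          then show "holds v y" using h hc by (cases "y = a \<or> y = b") auto
        qed
        then show "holds v x" using B(3) by blast
      qed
    qed
  qed
qed
lemma fcn_r1: "neg_R1 fcn" unfolding neg_R1_def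
proof (intro allI)
  fix A a
  show "fcn (A \<union> {a, Neg a}) = UNIV" by (rule fcn_univI[of "{a, Neg a}"]) auto
qed
lemma fcn_r2: "neg_R2 fcn" unfolding neg_R2_def
proof (intro allI impI)
  fix A a assume "fcn (A \<union> {Neg a}) = UNIV"
  then obtain B where B: "finite B" "B \<subseteq> A \<union> {Neg a}" "\<not>(\<exists>v. \<forall>y\<in>B. holds v y)" by (rule fcn_univD)
  show "a \<in> fcn A"
  proof (rule fcn_I)
    show "finite (B - {Neg a})" using B(1) by simp
    show "B - {Neg a} \<subseteq> A" using B(2) by blast
    fix v assume h: "\<forall>y\<in>B - {Neg a}. holds v y"
    show "holds v a"
    proof (rule ccontr)
      assume "\<not> holds v a"
      then have "\<forall>y\<in>B. holds v y" using h by auto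
      then show False using B(3) by blast
    qed
  qed
qed

lemma fcn_ops: "fcn \<in> monotone_ops"
  unfolding monotone_ops_def mem_Collect_eq
  by (intro conjI fcn_inc fcn_idem fcn_monot fcn_wc fcn_cr fcn_r1 fcn_r2)

lemma mono_sub_cum: "monotone_ops \<subseteq> cumulative_ops"
proof
  fix C assume "C \<in> monotone_ops"
  then have h: "inclusion C" "idempotence C" "monotonicity C" "weak_compactness C" "conj_R C" "neg_R1 C" "neg_R2 C"
    unfolding monotone_ops_def by auto
  have "cumulativity C" unfolding cumulativity_def
  proof (intro allI impI)
    fix A B assume "A \<subseteq> B \<and> B \<subseteq> C A"
    then have "C A \<subseteq> C B" "C B \<subseteq> C (C A)" using h(3) unfolding monotonicity_def by auto
    then show "C A = C B" using h(2) unfolding idempotence_def by auto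
  qed
  then show "C \<in> cumulative_ops" unfolding cumulative_ops_def using h by auto
qed

lemma fwd:
  assumes "a \<Turnstile> b" "C \<in> cumulative_ops"
  shows "C (A \<union> {a, Neg b}) = UNIV" "b \<in> C (A \<union> {a})"
proof -
  have u: "\<not>(\<exists>v. \<forall>y\<in>{a, Neg b}. holds v y)" using assms(1) unfolding entails_def by auto
  show *: "C (A \<union> {a, Neg b}) = UNIV" by (rule key[OF assms(2) _ u]) simp
  have "(A \<union> {a}) \<union> {Neg b} = A \<union> {a, Neg b}" by blast
  then have "C ((A \<union> {a}) \<union> {Neg b}) = UNIV" using * by (rule ssubst)
  moreover have "\<And>A a. C (A \<union> {Neg a}) = UNIV \<Longrightarrow> a \<in> C A"
    using assms(2) unfolding cumulative_ops_def neg_R2_def by blast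
  ultimately show "b \<in> C (A \<union> {a})" by blast
qed

lemma bwd:
  assumes "\<not> a \<Turnstile> b"
  shows "b \<notin> fcn {a}" "fcn {a, Neg b} \<noteq> UNIV"
proof -
  obtain v where v: "holds v a" "\<not> holds v b" using assms unfolding entails_def by blast
  show "b \<notin> fcn {a}"
  proof
    assume "b \<in> fcn {a}"
    then obtain B where "finite B" "B \<subseteq> {a}" "\<forall>v. (\<forall>y\<in>B. holds v y) \<longrightarrow> holds v b" by (rule fcn_E)
    then have "\<forall>y\<in>B. holds v y" using v by blast
    then show False using v \<open>\<forall>v. (\<forall>y\<in>B. holds v y) \<longrightarrow> holds v b\<close> by blast
  qed
  show "fcn {a, Neg b} \<noteq> UNIV"
  proof
    assume "fcn {a, Neg b} = UNIV"
    then obtain B where B: "finite B" "B \<subseteq> {a, Neg b}" "\<not>(\<exists>v. \<forall>y\<in>B. holds v y)" by (rule fcn_univD)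
    have "\<forall>y\<in>B. holds v y"
    proof
      fix y assume "y \<in> B"
      then have "y = a \<or> y = Neg b" using B(2) by blast
      then show "holds v y" using v by auto
    qed
    then show False using B(3) by blast
  qed
qed

theorem theorem5:
  fixes a b :: form
  shows "(a \<Turnstile> b \<longleftrightarrow> (\<forall>C\<in>monotone_ops. b \<in> C {a}))
       \<and> (a \<Turnstile> b \<longleftrightarrow> (\<forall>C\<in>cumulative_ops. b \<in> C {a}))
       \<and> (a \<Turnstile> b \<longleftrightarrow> (\<forall>C\<in>cumulative_ops. \<forall>A. b \<in> C (A \<union> {a})))
       \<and> (a \<Turnstile> b \<longleftrightarrow> (\<forall>C\<in>cumulative_ops. C {a, Neg b} = UNIV))"
proof -
  have f: "fcn \<in> cumulative_ops" using fcn_ops mono_sub_cum by (rule subsetD[rotated])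
  have f1: "b \<in> C (A \<union> {a})" if "a \<Turnstile> b" "C \<in> cumulative_ops" for C A
    using that by (rule fwd(2))
  have f2: "b \<in> C {a}" if "a \<Turnstile> b" "C \<in> cumulative_ops" for C
    using f1[OF that, of "{}"] by simp
  have f3: "C {a, Neg b} = UNIV" if "a \<Turnstile> b" "C \<in> cumulative_ops" for C
    using fwd(1)[OF that, of "{}"] by simp
  have m: "C \<in> cumulative_ops" if "C \<in> monotone_ops" for C
    using mono_sub_cum that by (rule subsetD)
  have g1: "a \<Turnstile> b" if h: "\<forall>C\<in>monotone_ops. b \<in> C {a}"
  proof (rule ccontr)
    assume "\<not> a \<Turnstile> b"
    moreover have "b \<in> fcn {a}" using h fcn_ops by (rule bspec)
    ultimately show False using bwd(1) by blast
  qed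
  have g2: "a \<Turnstile> b" if h: "\<forall>C\<in>cumulative_ops. b \<in> C {a}"
  proof (rule ccontr)
    assume "\<not> a \<Turnstile> b"
    moreover have "b \<in> fcn {a}" using h f by (rule bspec)
    ultimately show False using bwd(1) by blast
  qed
  have g3: "a \<Turnstile> b" if h: "\<forall>C\<in>cumulative_ops. \<forall>A. b \<in> C (A \<union> {a})"
  proof (rule ccontr)
    assume "\<not> a \<Turnstile> b"
    moreover have "b \<in> fcn ({} \<union> {a})" using bspec[OF h f] by (rule spec)
    ultimately show False using bwd(1) by simp
  qed
  have g4: "a \<Turnstile> b" if h: "\<forall>C\<in>cumulative_ops. C {a, Neg b} = UNIV"
  proof (rule ccontr)
    assume "\<not> a \<Turnstile> b"
    moreover have "fcn {a, Neg b} = UNIV" using h f by (rule bspec)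
    ultimately show False using bwd(2) by blast
  qed
  have P1: "a \<Turnstile> b \<longleftrightarrow> (\<forall>C\<in>monotone_ops. b \<in> C {a})"
    using g1 f2 m by blast
  have P2: "a \<Turnstile> b \<longleftrightarrow> (\<forall>C\<in>cumulative_ops. b \<in> C {a})"
    using g2 f2 by blast
  have P3: "a \<Turnstile> b \<longleftrightarrow> (\<forall>C\<in>cumulative_ops. \<forall>A. b \<in> C (A \<union> {a}))"
    using g3 f1 by blast
  have P4: "a \<Turnstile> b \<longleftrightarrow> (\<forall>C\<in>cumulative_ops. C {a, Neg b} = UNIV)"
    using g4 f3 by blast
  show ?thesis using P1 P2 P3 P4 by (intro conjI)
qed

end
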